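(* Let $\lambda>0$, $\gamma>0$, and let $\beta_1=\beta_1(\gamma)$ be the unique positive solution of $\frac{\sqrt\pi}{2}\gamma x(1+x)^{1/2}(3+x)=1$. For $b\in[0,\beta_1)$ let $\varphi_b$ denote the unique solution, within the set $K$ of bounded analytic functions $h:[0,\lambda]\to\mathbb{R}$ with $0\le h\le 1$, of \begin{align*} &[(1+b\, y(\eta))y'(\eta)]'+2\eta y'(\eta)=0, \quad 0<\eta<\lambda,\\ &y'(0)+b\, y(0)y'(0)-\gamma y(0)=0,\\ &y(\lambda)=1. \end{align*} Let $0<b<\beta_1$. Then there exists $L>0$ such that for all $b_1,b_2\in[0,b]$, $$\|\varphi_{b_1}-\varphi_{b_2}\|_\infty\le L|b_1-b_2|,$$ where $\|\cdot\|_\infty$ is the supremum norm on $[0,\lambda]$.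
   Context: Existence and uniqueness of $\varphi_b$ in $K$ for every $b\in[0,\beta_1)$ is known (it is the unique fixed point of a contraction on $K$). *)

theory Defs
  imports "HOL-Analysis.Analysis"
begin

definition beta1 :: "real \<Rightarrow> real" where
  "beta1 \<gamma> = (THE x. x > 0 \<and> sqrt pi / 2 * \<gamma> * x * sqrt (1 + x) * (3 + x) = 1)"

definition real_analytic_on :: "(real \<Rightarrow> real) \<Rightarrow> real set \<Rightarrow> bool" where
  "real_analytic_on h S \<longleftrightarrow>
     (\<forall>x\<in>S. \<exists>r>0. \<exists>a::nat \<Rightarrow> real. \<forall>y\<in>S. \<bar>y - x\<bar> < r \<longrightarrow> (\<lambda>n. a n * (y - x) ^ n) sums h y)"

definition Kset :: "real \<Rightarrow> (real \<Rightarrow> real) set" where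
  "Kset lam = {h. real_analytic_on h {0..lam} \<and> bounded (h ` {0..lam})
                 \<and> (\<forall>x\<in>{0..lam}. 0 \<le> h x \<and> h x \<le> 1)}"

definition solves_bvp :: "real \<Rightarrow> real \<Rightarrow> real \<Rightarrow> (real \<Rightarrow> real) \<Rightarrow> bool" where
  "solves_bvp lam \<gamma> b y \<longleftrightarrow>
     (\<exists>y'. (\<forall>x\<in>{0..lam}. (y has_real_derivative y' x) (at x within {0..lam}))
        \<and> (\<forall>x\<in>{0<..<lam}. ((\<lambda>t. (1 + b * y t) * y' t) has_real_derivative (- 2 * x * y' x)) (at x))
        \<and> y' 0 + b * y 0 * y' 0 - \<gamma> * y 0 = 0
        \<and> y lam = 1)"

end

theory Submission
  imports Defs
begin

locale sol =
  fixes lam c g :: real and y y' :: "real \<Rightarrow> real"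
  assumes lam: "lam > 0" and c0: "0 \<le> c" and g0: "g > 0"
    and rng: "\<And>x. x \<in> {0..lam} \<Longrightarrow> 0 \<le> y x \<and> y x \<le> 1"
    and HD: "\<And>x. x\<in>{0..lam} \<Longrightarrow> (y has_real_derivative y' x) (at x within {0..lam})"
    and HW: "\<And>x. x\<in>{0<..<lam} \<Longrightarrow> ((\<lambda>t. (1 + c * y t) * y' t) has_real_derivative (- 2 * x * y' x)) (at x)"
    and BC: "y' 0 + c * y 0 * y' 0 - g * y 0 = 0"
    and End: "y lam = 1"
begin

definition w where "w t = (1 + c * y t) * y' t"

lemma cont: "continuous_on {0..lam} y"
  using HD by (meson continuous_on_eq_continuous_within DERIV_continuous)

lemma dy: "x \<in> {0<..<lam} \<Longrightarrow> (y has_real_derivative y' x) (at x)"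
  using HD[of x] at_within_interior[of x "{0..lam}"] by auto

lemma den: "x \<in> {0..lam} \<Longrightarrow> 1 \<le> 1 + c * y x"
  using rng[of x] c0 by simp

lemma yp: "x \<in> {0..lam} \<Longrightarrow> y' x = w x / (1 + c * y x)"
  using den[of x] by (simp add: w_def)

lemma dw: "x \<in> {0<..<lam} \<Longrightarrow> (w has_real_derivative (- 2 * x * w x / (1 + c * y x))) (at x)"
proof -
  assume x: "x \<in> {0<..<lam}"
  have e1: "w = (\<lambda>t. (1 + c * y t) * y' t)" by (auto simp: w_def)
  have e2: "- 2 * x * y' x = - 2 * x * w x / (1 + c * y x)" using yp[of x] x by simp
  show ?thesis using HW[OF x] unfolding e1[symmetric] e2 .
qed

lemma w0: "w 0 = g * y 0"
  using BC by (simp add: w_def algebra_simps)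

lemma contw_int: "x \<in> {0<..<lam} \<Longrightarrow> isCont w x"
  using dw DERIV_isCont by blast

lemma contw_sub: "0 < a \<Longrightarrow> b < lam \<Longrightarrow> continuous_on {a..b} w"
  by (intro continuous_at_imp_continuous_on) (auto intro!: contw_int)

lemma wmono: assumes "0 < s" "s \<le> t" "t < lam"
  shows "(w s)^2 * exp (2 * s^2) \<le> (w t)^2 * exp (2 * t^2)"
proof (rule DERIV_nonneg_imp_increasing_open[OF assms(2)])
  fix x assume x: "s < x" "x < t"
  hence xi: "x \<in> {0<..<lam}" using assms by auto
  have d: "1 \<le> 1 + c * y x" using den[of x] xi by auto
  have "((\<lambda>t. (w t)^2 * exp (2 * t^2)) has_real_derivative
     (2 * w x * (- 2 * x * w x / (1 + c * y x))) * exp (2 * x^2) + (w x)^2 * (exp (2 * x^2) * (2 * (2 * x)))) (at x)"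
    by (rule derivative_eq_intros dw[OF xi] refl | simp)+
  moreover have "0 \<le> (2 * w x * (- 2 * x * w x / (1 + c * y x))) * exp (2 * x^2) + (w x)^2 * (exp (2 * x^2) * (2 * (2 * x)))"
  proof -
    have "x * (w x)^2 / (1 + c * y x) \<le> x * (w x)^2"
      using d xi mult_left_mono[of 1 "1 + c * y x" "(w x)^2"] by (simp add: divide_le_eq)
    hence "0 \<le> (4 * x * (w x)^2 - 4 * (x * (w x)^2 / (1 + c * y x))) * exp (2 * x^2)"
      by (intro mult_nonneg_nonneg) auto
    thus ?thesis by (simp add: algebra_simps power2_eq_square)
  qed
  ultimately show "\<exists>d. ((\<lambda>t. (w t)^2 * exp (2 * t^2)) has_real_derivative d) (at x) \<and> 0 \<le> d" by blast
next
  show "continuous_on {s..t} (\<lambda>t. (w t)^2 * exp (2 * t^2))"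
    using contw_sub[of s t] assms by (intro continuous_intros) auto
qed

definition Bw where "Bw = sqrt ((w (lam/2))^2 * exp (lam^2/2))"

lemma wbound: assumes "0 < t" "t \<le> lam/2" shows "\<bar>w t\<bar> \<le> Bw"
proof -
  have "(w t)^2 \<le> (w t)^2 * exp (2 * t^2)" using mult_left_mono[of 1 "exp (2 * t^2)" "(w t)^2"] by simp
  also have "\<dots> \<le> (w (lam/2))^2 * exp (2 * (lam/2)^2)" using wmono[of t "lam/2"] assms lam by auto
  also have "\<dots> = (w (lam/2))^2 * exp (lam^2/2)" by (simp add: power2_eq_square)
  finally show ?thesis unfolding Bw_def by (metis real_sqrt_le_mono real_sqrt_abs)
qed

lemma Bw0: "0 \<le> Bw" unfolding Bw_def by simp

lemma wlip: assumes "0 < s" "s \<le> t" "t \<le> lam/2"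
  shows "\<bar>w t - w s\<bar> \<le> 2 * lam * Bw * (t - s)"
proof -
  have der: "\<And>x. s < x \<Longrightarrow> x < t \<Longrightarrow> x \<in> {0<..<lam} \<and> \<bar>- 2 * x * w x / (1 + c * y x)\<bar> \<le> 2 * lam * Bw"
  proof -
    fix x assume x: "s < x" "x < t"
    hence xi: "x \<in> {0<..<lam}" using assms lam by auto
    have d: "1 \<le> 1 + c * y x" using den[of x] xi by auto
    have "\<bar>- 2 * x * w x / (1 + c * y x)\<bar> = 2 * x * \<bar>w x\<bar> / (1 + c * y x)"
      using d xi by (simp add: abs_mult)
    also have "\<dots> \<le> 2 * x * \<bar>w x\<bar>" using d xi mult_left_mono[of 1 "1 + c * y x" "2 * x * \<bar>w x\<bar>"] by (simp add: divide_le_eq)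
    also have "\<dots> \<le> 2 * lam * Bw" using wbound[of x] x assms xi
      by (intro mult_mono) auto
    finally show "x \<in> {0<..<lam} \<and> \<bar>- 2 * x * w x / (1 + c * y x)\<bar> \<le> 2 * lam * Bw" using xi by blast
  qed
  have cw: "continuous_on {s..t} w" using contw_sub[of s t] assms lam by auto
  have A: "w s + 2 * lam * Bw * s \<le> w t + 2 * lam * Bw * t"
  proof (rule DERIV_nonneg_imp_increasing_open[OF assms(2), where f = "\<lambda>x. w x + 2 * lam * Bw * x"])
    fix x assume x: "s < x" "x < t"
    from der[OF x] have xi: "x \<in> {0<..<lam}" and b: "\<bar>- 2 * x * w x / (1 + c * y x)\<bar> \<le> 2 * lam * Bw" by auto
    have "((\<lambda>x. w x + 2 * lam * Bw * x) has_real_derivative (- 2 * x * w x / (1 + c * y x)) + 2 * lam * Bw * 1) (at x)"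
      by (rule derivative_eq_intros dw[OF xi] refl | simp)+
    moreover have "0 \<le> - 2 * x * w x / (1 + c * y x) + 2 * lam * Bw * 1" using b by argo
    ultimately show "\<exists>d. ((\<lambda>x. w x + 2 * lam * Bw * x) has_real_derivative d) (at x) \<and> 0 \<le> d" by blast
  qed (use cw in \<open>intro continuous_intros\<close>)
  have B: "2 * lam * Bw * s - w s \<le> 2 * lam * Bw * t - w t"
  proof (rule DERIV_nonneg_imp_increasing_open[OF assms(2), where f = "\<lambda>x. 2 * lam * Bw * x - w x"])
    fix x assume x: "s < x" "x < t"
    from der[OF x] have xi: "x \<in> {0<..<lam}" and b: "\<bar>- 2 * x * w x / (1 + c * y x)\<bar> \<le> 2 * lam * Bw" by auto
    have "((\<lambda>x. 2 * lam * Bw * x - w x) has_real_derivative 2 * lam * Bw * 1 - (- 2 * x * w x / (1 + c * y x))) (at x)"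
      by (rule derivative_eq_intros dw[OF xi] refl | simp)+
    moreover have "0 \<le> 2 * lam * Bw * 1 - (- 2 * x * w x / (1 + c * y x))" using b by argo
    ultimately show "\<exists>d. ((\<lambda>x. 2 * lam * Bw * x - w x) has_real_derivative d) (at x) \<and> 0 \<le> d" by blast
  qed (use cw in \<open>intro continuous_intros\<close>)
  from A B show ?thesis by (simp add: abs_le_iff algebra_simps)
qed

lemma ar: "at 0 within {0..lam} = at_right (0::real)"
  using at_within_Icc_at_right[OF lam] .

lemma wlim: "(w \<longlongrightarrow> w 0) (at_right 0)"
proof -
  have q: "((\<lambda>s. (y s - y 0) / s) \<longlongrightarrow> y' 0) (at_right 0)"
    using HD[of 0] lam unfolding has_field_derivative_iff ar by simp
  have yc: "(y \<longlongrightarrow> y 0) (at_right 0)"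
    using cont lam unfolding continuous_on_eq_continuous_within continuous_within ar[symmetric] by auto
  have ex: "\<forall>t. \<exists>z. 0 < t \<and> t < lam/2 \<longrightarrow> (0 < z \<and> z < t \<and> y t - y 0 = t * y' z)"
  proof
    fix t show "\<exists>z. 0 < t \<and> t < lam/2 \<longrightarrow> (0 < z \<and> z < t \<and> y t - y 0 = t * y' z)"
    proof (cases "0 < t \<and> t < lam/2")
      case True
      have "\<exists>l z. 0 < z \<and> z < t \<and> DERIV y z :> l \<and> y t - y 0 = (t - 0) * l"
        apply (rule MVT)
        using True cont continuous_on_subset[of "{0..lam}" y "{0..t}"] apply auto[2]
        using True dy real_differentiable_def by (metis greaterThanLessThan_iff less_trans field_sum_of_halves lam half_gt_zero less_add_same_cancel1)
      then obtain l z where "0 < z" "z < t" "DERIV y z :> l" "y t - y 0 = (t - 0) * l" by blast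
      moreover have "l = y' z" using DERIV_unique[OF \<open>DERIV y z :> l\<close> dy[of z]] True \<open>0 < z\<close> \<open>z < t\<close> by auto
      ultimately show ?thesis by auto
    qed auto
  qed
  then obtain xi where xi: "\<And>t. 0 < t \<Longrightarrow> t < lam/2 \<Longrightarrow> 0 < xi t \<and> xi t < t \<and> y t - y 0 = t * y' (xi t)"
    by metis
  have ev: "eventually (\<lambda>t. 0 < t \<and> t < lam/2) (at_right (0::real))"
    unfolding eventually_at_right_field using lam by (intro exI[of _ "lam/2"]) auto
  have xl: "(xi \<longlongrightarrow> 0) (at_right 0)"
  proof (rule tendsto_sandwich[of "\<lambda>_. 0" xi _ "\<lambda>t. t"])
    show "\<forall>\<^sub>F n in at_right 0. 0 \<le> xi n" using ev by eventually_elim (use xi in force)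
    show "\<forall>\<^sub>F n in at_right 0. xi n \<le> n" using ev by eventually_elim (use xi in force)
  qed auto
  have xf: "filterlim xi (at_right 0) (at_right 0)"
    unfolding filterlim_at using xl ev by (auto elim!: eventually_mono dest: xi)
  have yx: "((\<lambda>t. y (xi t)) \<longlongrightarrow> y 0) (at_right 0)"
    using filterlim_compose[OF yc xf] .
  have P: "((\<lambda>t. (1 + c * y (xi t)) * ((y t - y 0) / t)) \<longlongrightarrow> (1 + c * y 0) * y' 0) (at_right 0)"
    by (intro tendsto_intros yx q)
  have g: "((\<lambda>t. 2 * lam * Bw * t) \<longlongrightarrow> 0) (at_right 0)"
  proof -
    have "((\<lambda>t. 2 * lam * Bw * t) \<longlongrightarrow> 2 * lam * Bw * 0) (at_right 0)" by (intro tendsto_intros)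
    thus ?thesis by simp
  qed
  have R: "((\<lambda>t. w t - (1 + c * y (xi t)) * ((y t - y 0) / t)) \<longlongrightarrow> 0) (at_right 0)"
  proof (rule Lim_null_comparison[OF _ g])
    show "\<forall>\<^sub>F x in at_right 0. norm (w x - (1 + c * y (xi x)) * ((y x - y 0) / x)) \<le> 2 * lam * Bw * x"
      using ev
    proof eventually_elim
      case (elim t)
      from xi[of t] elim have a: "0 < xi t" "xi t < t" "y t - y 0 = t * y' (xi t)" by auto
      have e: "(1 + c * y (xi t)) * ((y t - y 0) / t) = w (xi t)" using a elim by (simp add: w_def)
      have "2*lam*Bw*(t - xi t) \<le> 2*lam*Bw*t" using Bw0 lam a by (intro mult_left_mono) auto
      thus ?case unfolding e real_norm_def using wlip[of "xi t" t] a elim by linarith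
    qed
  qed
  have "((\<lambda>t. (1 + c * y (xi t)) * ((y t - y 0) / t) + (w t - (1 + c * y (xi t)) * ((y t - y 0) / t))) \<longlongrightarrow> (1 + c * y 0) * y' 0 + 0) (at_right 0)"
    by (rule tendsto_add[OF P R])
  thus ?thesis by (simp add: w_def[abs_def])
qed

lemma contw: assumes "t < lam" shows "continuous_on {0..t} w"
proof (cases "t \<le> 0")
  case True
  hence "{0..t} = {} \<or> {0..t} = {0}" by auto
  thus ?thesis by auto
next
  case tpos: False
  show ?thesis unfolding continuous_on_eq_continuous_within
proof
  fix x assume x: "x \<in> {0..t}"
  show "continuous (at x within {0..t}) w"
  proof (cases "x = 0")
    case True
    have "at 0 within {0..t} = at_right (0::real)" using tpos by (intro at_within_Icc_at_right) auto
    thus ?thesis using wlim True by (simp add: continuous_within)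
  next
    case False
    thus ?thesis using contw_int[of x] x assms by (auto intro: continuous_at_imp_continuous_within)
  qed
qed
qed

end

context sol begin
lemma wdec: assumes "0 \<le> t" "t < lam" shows "(w t)^2 \<le> (w 0)^2"
proof (rule DERIV_nonpos_imp_decreasing_open[OF assms(1)])
  fix x assume x: "0 < x" "x < t"
  hence xi: "x \<in> {0<..<lam}" using assms by auto
  have d: "1 \<le> 1 + c * y x" using den[of x] xi by auto
  have "((\<lambda>t. (w t)^2) has_real_derivative 2 * w x * (- 2 * x * w x / (1 + c * y x))) (at x)"
    by (rule derivative_eq_intros dw[OF xi] refl | simp)+
  moreover have "2 * w x * (- 2 * x * w x / (1 + c * y x)) \<le> 0"
  proof -
    have s: "0 \<le> w x * w x" by simp
    have "0 \<le> 4 * x * (w x * w x)" using x s by simp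
    hence "0 \<le> 4 * x * (w x * w x) / (1 + c * y x)" using d by simp
    thus ?thesis by (simp add: algebra_simps)
  qed
  ultimately show "\<exists>d. ((\<lambda>t. (w t)^2) has_real_derivative d) (at x) \<and> d \<le> 0" by blast
next
  show "continuous_on {0..t} (\<lambda>t. (w t)^2)" using contw[OF assms(2)] by (intro continuous_intros)
qed

lemma winc: assumes "0 \<le> t" "t < lam" shows "(w 0)^2 \<le> (w t)^2 * exp (2 * t^2)"
proof -
  have "(w 0)^2 * exp (2 * 0^2) \<le> (w t)^2 * exp (2 * t^2)"
  proof (rule DERIV_nonneg_imp_increasing_open[OF assms(1), where f="\<lambda>t. (w t)^2 * exp (2 * t^2)"])
    fix x assume x: "0 < x" "x < t"
    hence xi: "x \<in> {0<..<lam}" using assms by auto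
    have d: "1 \<le> 1 + c * y x" using den[of x] xi by auto
    have "((\<lambda>t. (w t)^2 * exp (2 * t^2)) has_real_derivative
       (2 * w x * (- 2 * x * w x / (1 + c * y x))) * exp (2 * x^2) + (w x)^2 * (exp (2 * x^2) * (2 * (2 * x)))) (at x)"
      by (rule derivative_eq_intros dw[OF xi] refl | simp)+
    moreover have "0 \<le> (2 * w x * (- 2 * x * w x / (1 + c * y x))) * exp (2 * x^2) + (w x)^2 * (exp (2 * x^2) * (2 * (2 * x)))"
    proof -
      have "x * (w x)^2 / (1 + c * y x) \<le> x * (w x)^2"
        using d xi mult_left_mono[of 1 "1 + c * y x" "x * (w x)^2"] by (simp add: divide_le_eq)
      hence "0 \<le> (4 * x * (w x)^2 - 4 * (x * (w x)^2 / (1 + c * y x))) * exp (2 * x^2)"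
        by (intro mult_nonneg_nonneg) auto
      thus ?thesis by (simp add: algebra_simps power2_eq_square)
    qed
    ultimately show "\<exists>d. ((\<lambda>t. (w t)^2 * exp (2 * t^2)) has_real_derivative d) (at x) \<and> 0 \<le> d" by blast
  next
    show "continuous_on {0..t} (\<lambda>t. (w t)^2 * exp (2 * t^2))"
      using contw[OF assms(2)] by (intro continuous_intros) auto
  qed
  thus ?thesis by simp
qed

lemma apos: "0 < y 0"
proof (rule ccontr)
  assume "\<not> 0 < y 0"
  hence y0: "y 0 = 0" using rng[of 0] lam by force
  have "y lam = y 0"
  proof (rule DERIV_isconst_end[OF lam cont])
    fix x assume x: "0 < x" "x < lam"
    have "(w x)^2 \<le> 0" using wdec[of x] x w0 y0 by simp
    hence "w x = 0" by simp
    hence "y' x = 0" using yp[of x] x by simp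
    thus "DERIV y x :> 0" using dy[of x] x by simp
  qed
  thus False using End y0 by simp
qed

lemma wpos: assumes "0 \<le> t" "t < lam" shows "0 < w t"
proof (rule ccontr)
  assume "\<not> 0 < w t"
  have nz: "\<And>s. 0 \<le> s \<Longrightarrow> s < lam \<Longrightarrow> w s \<noteq> 0"
  proof
    fix s assume s: "0 \<le> s" "s < lam" "w s = 0"
    have "0 < (w 0)^2" using w0 apos g0 by simp
    thus False using winc[of s] s by simp
  qed
  have "w 0 > 0" using w0 apos g0 by simp
  have "\<exists>x. 0 \<le> x \<and> x \<le> t \<and> w x = 0"
  proof (rule IVT2')
    show "w t \<le> 0" using \<open>\<not> 0 < w t\<close> by simp
    show "0 \<le> w 0" using \<open>w 0 > 0\<close> by simp
  qed (use assms contw[OF assms(2)] in auto)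
  then obtain x where x: "0 \<le> x" "x \<le> t" "w x = 0" by blast
  thus False using nz[of x] assms by auto
qed

lemma wle: assumes "0 \<le> t" "t < lam" shows "w t \<le> g"
proof -
  have p: "0 < w 0" using wpos[of 0] lam by simp
  have "w t \<le> w 0" using power2_le_imp_le[OF wdec[OF assms]] p by linarith
  also have "\<dots> \<le> g" unfolding w0 using rng[of 0] lam g0 mult_left_le[of "y 0" g] by auto
  finally show ?thesis .
qed

definition u where "u t = y t + c * (y t)^2 / 2"

lemma du: "x \<in> {0<..<lam} \<Longrightarrow> (u has_real_derivative w x) (at x)"
proof -
  assume x: "x \<in> {0<..<lam}"
  have "((\<lambda>t. y t + c * (y t)^2 / 2) has_real_derivative y' x + c * (2 * y x * y' x) / 2) (at x)"
    by (rule derivative_eq_intros dy[OF x] refl | simp)+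
  moreover have "y' x + c * (2 * y x * y' x) / 2 = w x" by (simp add: w_def algebra_simps)
  ultimately show ?thesis unfolding u_def[abs_def] by simp
qed

lemma contu: "continuous_on {0..lam} u"
  unfolding u_def[abs_def] using cont by (intro continuous_intros) auto

lemma dl: "x \<in> {0<..<lam} \<Longrightarrow> ((\<lambda>t. ln (w t)) has_real_derivative - 2 * x / (1 + c * y x)) (at x)"
proof -
  assume x: "x \<in> {0<..<lam}"
  have p: "0 < w x" using wpos[of x] x by auto
  have "((\<lambda>t. ln (w t)) has_real_derivative inverse (w x) * (- 2 * x * w x / (1 + c * y x))) (at x)"
    by (rule DERIV_chain2[OF DERIV_ln[OF p] dw[OF x]])
  moreover have "inverse (w x) * (- 2 * x * w x / (1 + c * y x)) = - 2 * x / (1 + c * y x)"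
    using p by (simp add: field_simps)
  ultimately show ?thesis by (metis (no_types))
qed

lemma contl: assumes "t < lam" shows "continuous_on {0..t} (\<lambda>s. ln (w s))"
proof (intro continuous_intros contw[OF assms] ballI)
  fix s assume "s \<in> {0..t}"
  thus "w s \<noteq> 0" using wpos[of s] assms by auto
qed

end

lemma inv_diff_bound:
  fixes A B d :: real
  assumes "1 \<le> A" "1 \<le> B" "-d \<le> A - B" "0 \<le> d"
  shows "-d \<le> 1/B - 1/A"
proof -
  have e: "1/B - 1/A = (A - B) / (A * B)" using assms by (simp add: field_simps)
  have AB: "1 \<le> A * B" using assms mult_mono[of 1 A 1 B] by auto
  show ?thesis
  proof (cases "0 \<le> A - B")
    case True
    have "0 \<le> (A - B) / (A * B)" using True AB by (intro divide_nonneg_nonneg) auto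
    thus ?thesis unfolding e using assms by linarith
  next
    case False
    have "(A - B) * (A * B) \<le> (A - B) * 1" using False AB by (intro mult_left_mono_neg) auto
    hence "A - B \<le> (A - B) / (A * B)" using AB by (simp add: le_divide_eq)
    thus ?thesis unfolding e using assms by linarith
  qed
qed

lemma a_est:
  assumes S1: "sol lam c1 g y1 y1'" and S2: "sol lam c2 g y2 y2'"
  shows "y1 0 - y2 0 \<le> (1 + 2 * lam^3 * g) * \<bar>c1 - c2\<bar>"
proof (cases "y1 0 \<le> y2 0")
  case True
  interpret s1: sol lam c1 g y1 y1' by fact
  have "0 \<le> (1 + 2 * lam^3 * g) * \<bar>c1 - c2\<bar>" using s1.lam s1.g0 by simp
  thus ?thesis using True by linarith
next
  case False
  interpret s1: sol lam c1 g y1 y1' by fact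
  interpret s2: sol lam c2 g y2 y2' by fact
  define d where "d = \<bar>c1 - c2\<bar>"
  have d0: "0 \<le> d" by (simp add: d_def)
  have lam: "0 < lam" by (rule s1.lam)
  have g: "0 < g" by (rule s1.g0)
  define Z where "Z = {0..lam} \<inter> (\<lambda>t. y1 t - y2 t) -` {..0}"
  have clZ: "closed Z" unfolding Z_def
    by (intro continuous_closed_preimage continuous_intros s1.cont s2.cont)
  have lZ: "lam \<in> Z" unfolding Z_def using s1.End s2.End lam by auto
  have bZ: "bdd_below Z" unfolding Z_def by (rule bdd_belowI[of _ 0]) auto
  define T where "T = Inf Z"
  have TZ: "T \<in> Z" unfolding T_def using closed_contains_Inf[OF _ bZ clZ] lZ by auto
  have T0: "0 \<le> T" "T \<le> lam" using TZ unfolding Z_def by auto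
  have yT: "y1 T \<le> y2 T" using TZ unfolding Z_def by auto
  have gt: "\<And>s. 0 \<le> s \<Longrightarrow> s < T \<Longrightarrow> y2 s < y1 s"
  proof (rule ccontr)
    fix s assume s: "0 \<le> s" "s < T" "\<not> y2 s < y1 s"
    hence "s \<in> Z" unfolding Z_def using T0 by auto
    hence "T \<le> s" unfolding T_def using bZ by (rule cInf_lower)
    thus False using s by simp
  qed
  have step1: "\<And>s. 0 < s \<Longrightarrow> s < T \<Longrightarrow> s1.w s - s2.w s \<ge> - (2 * lam^2 * g * d)"
  proof -
    fix s assume s: "0 < s" "s < T"
    have slam: "s < lam" using s T0 by simp
    have mono: "ln (s1.w 0) - ln (s2.w 0) + 2 * lam * d * 0 \<le> ln (s1.w s) - ln (s2.w s) + 2 * lam * d * s"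
    proof (rule DERIV_nonneg_imp_increasing_open[where f = "\<lambda>x. ln (s1.w x) - ln (s2.w x) + 2 * lam * d * x"])
      show "0 \<le> s" using s by simp
      show "continuous_on {0..s} (\<lambda>x. ln (s1.w x) - ln (s2.w x) + 2 * lam * d * x)"
        by (intro continuous_on_add continuous_on_diff s1.contl[OF slam] s2.contl[OF slam]) (intro continuous_intros)
      fix x assume x: "0 < x" "x < s"
      hence xi: "x \<in> {0<..<lam}" using slam by auto
      have "((\<lambda>x. ln (s1.w x) - ln (s2.w x) + 2 * lam * d * x) has_real_derivative
          (- 2 * x / (1 + c1 * y1 x)) - (- 2 * x / (1 + c2 * y2 x)) + 2 * lam * d * 1) (at x)"
        by (rule DERIV_add[OF DERIV_diff[OF s1.dl[OF xi] s2.dl[OF xi]] DERIV_cmult[OF DERIV_ident]])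
      moreover have "0 \<le> (- 2 * x / (1 + c1 * y1 x)) - (- 2 * x / (1 + c2 * y2 x)) + 2 * lam * d * 1"
      proof -
        have A: "1 \<le> 1 + c1 * y1 x" using s1.den[of x] xi by auto
        have B: "1 \<le> 1 + c2 * y2 x" using s2.den[of x] xi by auto
        have yy: "y2 x < y1 x" using gt[of x] x s by auto
        have r2: "0 \<le> y2 x" "y2 x \<le> 1" using s2.rng[of x] xi by auto
        have "c1 * y2 x \<le> c1 * y1 x" using yy s1.c0 by (intro mult_left_mono) auto
        moreover have "(c1 - c2) * y2 x \<ge> - d"
        proof -
          have "\<bar>(c1 - c2) * y2 x\<bar> \<le> d * 1" unfolding d_def abs_mult using r2 by (intro mult_left_mono) auto
          thus ?thesis by (simp add: abs_le_iff)
        qed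
        ultimately have "- d \<le> (1 + c1 * y1 x) - (1 + c2 * y2 x)" by (simp add: algebra_simps)
        from inv_diff_bound[OF A B this d0]
        have "- d \<le> 1 / (1 + c2 * y2 x) - 1 / (1 + c1 * y1 x)" .
        hence "2 * x * (- d) \<le> 2 * x * (1 / (1 + c2 * y2 x) - 1 / (1 + c1 * y1 x))"
          using x by (intro mult_left_mono) auto
        moreover have "2 * x * d \<le> 2 * lam * d" using x slam d0 by (intro mult_right_mono) auto
        ultimately show ?thesis by (simp add: algebra_simps)
      qed
      ultimately show "\<exists>e. ((\<lambda>x. ln (s1.w x) - ln (s2.w x) + 2 * lam * d * x) has_real_derivative e) (at x) \<and> 0 \<le> e"
        by blast
    qed
    have w0le: "s2.w 0 \<le> s1.w 0" unfolding s1.w0 s2.w0 using False g by simp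
    have p10: "0 < s2.w 0" using s2.wpos[of 0] lam by simp
    have "ln (s2.w 0) \<le> ln (s1.w 0)" using w0le p10 by simp
    with mono have l: "ln (s2.w s) - 2 * lam * d * s \<le> ln (s1.w s)" by simp
    have p1: "0 < s1.w s" and p2: "0 < s2.w s" using s1.wpos[of s] s2.wpos[of s] s slam by auto
    have "s2.w s * exp (- (2 * lam * d * s)) = exp (ln (s2.w s) - 2 * lam * d * s)"
      using p2 by (simp add: exp_diff exp_minus field_simps)
    also have "\<dots> \<le> s1.w s" using l p1 by (metis exp_le_cancel_iff exp_ln)
    finally have e1: "s2.w s * exp (- (2 * lam * d * s)) \<le> s1.w s" .
    have "s2.w s * (1 - 2 * lam * d * s) \<le> s2.w s * exp (- (2 * lam * d * s))"
      using p2 exp_ge_add_one_self[of "- (2 * lam * d * s)"] by (intro mult_left_mono) auto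
    moreover have "s2.w s * (2 * lam * d * s) \<le> g * (2 * lam * d * lam)"
      using s2.wle[of s] p2 s slam lam d0 by (intro mult_mono) auto
    ultimately show "s1.w s - s2.w s \<ge> - (2 * lam^2 * g * d)" using e1
      by (simp add: algebra_simps power2_eq_square)
  qed
  have step2: "s1.u 0 - s2.u 0 + 2 * lam^2 * g * d * 0 \<le> s1.u T - s2.u T + 2 * lam^2 * g * d * T"
  proof (rule DERIV_nonneg_imp_increasing_open[where f = "\<lambda>x. s1.u x - s2.u x + 2 * lam^2 * g * d * x"])
    show "0 \<le> T" by fact
    show "continuous_on {0..T} (\<lambda>x. s1.u x - s2.u x + 2 * lam^2 * g * d * x)"
      using continuous_on_subset[OF s1.contu, of "{0..T}"] continuous_on_subset[OF s2.contu, of "{0..T}"] T0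
      by (intro continuous_intros) auto
    fix x assume x: "0 < x" "x < T"
    hence xi: "x \<in> {0<..<lam}" using T0 by auto
    have "((\<lambda>x. s1.u x - s2.u x + 2 * lam^2 * g * d * x) has_real_derivative s1.w x - s2.w x + 2 * lam^2 * g * d * 1) (at x)"
      by (rule DERIV_add[OF DERIV_diff[OF s1.du[OF xi] s2.du[OF xi]] DERIV_cmult[OF DERIV_ident]])
    moreover have "0 \<le> s1.w x - s2.w x + 2 * lam^2 * g * d * 1" using step1[OF x] by simp
    ultimately show "\<exists>e. ((\<lambda>x. s1.u x - s2.u x + 2 * lam^2 * g * d * x) has_real_derivative e) (at x) \<and> 0 \<le> e"
      by blast
  qed
  have st2: "s1.u 0 - s2.u 0 \<le> s1.u T - s2.u T + 2 * lam^3 * g * d"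
  proof -
    have "2 * lam^2 * g * d * T \<le> 2 * lam^2 * g * d * lam" using T0 g d0 by (intro mult_left_mono) auto
    moreover have "2 * lam^2 * g * d * lam = 2 * lam^3 * g * d" by (simp add: power3_eq_cube power2_eq_square)
    ultimately show ?thesis using step2 by linarith
  qed
  have rT1: "0 \<le> y1 T" "y1 T \<le> 1" using s1.rng[of T] T0 by auto
  have rT2: "0 \<le> y2 T" "y2 T \<le> 1" using s2.rng[of T] T0 by auto
  have r01: "0 \<le> y1 0" "y1 0 \<le> 1" using s1.rng[of 0] lam by auto
  have r02: "0 \<le> y2 0" "y2 0 \<le> 1" using s2.rng[of 0] lam by auto
  have cd: "\<And>z. 0 \<le> z \<Longrightarrow> z \<le> 1 \<Longrightarrow> \<bar>(c1 - c2) * z^2\<bar> \<le> d"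
  proof -
    fix z :: real assume "0 \<le> z" "z \<le> 1"
    hence "z^2 \<le> 1" by (simp add: power_le_one)
    hence "\<bar>c1 - c2\<bar> * z^2 \<le> d * 1" unfolding d_def by (intro mult_left_mono) auto
    thus "\<bar>(c1 - c2) * z^2\<bar> \<le> d" by (simp add: abs_mult)
  qed
  have "(y1 T)^2 \<le> (y2 T)^2" using yT rT1 by (intro power_mono) auto
  hence "c1 * (y1 T)^2 \<le> c1 * (y2 T)^2" using s1.c0 by (intro mult_left_mono) auto
  hence uT: "s1.u T - s2.u T \<le> d / 2"
    using yT cd[OF rT2] unfolding s1.u_def s2.u_def by (simp add: abs_le_iff algebra_simps)
  have "(y2 0)^2 \<le> (y1 0)^2" using False r02 by (intro power_mono) auto
  hence "c1 * (y2 0)^2 \<le> c1 * (y1 0)^2" using s1.c0 by (intro mult_left_mono) auto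
  hence u0: "y1 0 - y2 0 - d / 2 \<le> s1.u 0 - s2.u 0"
    using cd[OF r02] unfolding s1.u_def s2.u_def by (simp add: abs_le_iff algebra_simps)
  have "y1 0 - y2 0 \<le> d + 2 * lam^3 * g * d" using st2 uT u0 by linarith
  thus ?thesis unfolding d_def by (simp add: algebra_simps)
qed


definition Mc :: "real \<Rightarrow> real \<Rightarrow> real \<Rightarrow> real" where
  "Mc lam g b = 1 + 2*g*b + g + 4*lam + 2*lam*g*b + 2*lam*g"

lemma poly_bound:
  fixes X Z e g b lam :: real
  assumes "0 \<le> X" "0 \<le> Z" "0 \<le> e" "0 \<le> g" "0 \<le> b" "0 \<le> lam"
  shows "2*X*(Z + g*b*X + g*e) + 4*lam*Z*(Z + g*b*X + g*e) \<le> Mc lam g b * (X^2 + Z^2 + e^2)"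
proof -
  have h1: "2*X*Z \<le> X^2 + Z^2" using zero_le_power2[of "X - Z"] unfolding power2_diff by linarith
  have h2: "2*e*X \<le> X^2 + e^2" using zero_le_power2[of "X - e"] unfolding power2_diff by (simp add: mult.commute mult.left_commute)
  have h3: "2*e*Z \<le> Z^2 + e^2" using zero_le_power2[of "Z - e"] unfolding power2_diff by (simp add: mult.commute mult.left_commute)
  have k1: "(2*lam*g*b) * (2*X*Z) \<le> (2*lam*g*b) * (X^2 + Z^2)" using h1 assms by (intro mult_left_mono) auto
  have k2: "g * (2*e*X) \<le> g * (X^2 + e^2)" using h2 assms by (intro mult_left_mono) auto
  have k3: "(2*lam*g) * (2*e*Z) \<le> (2*lam*g) * (Z^2 + e^2)" using h3 assms by (intro mult_left_mono) auto
  have m1: "(1 + 2*g*b + g + 2*lam*g*b) * X^2 \<le> Mc lam g b * X^2"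
    using assms unfolding Mc_def by (intro mult_right_mono) (auto intro!: mult_nonneg_nonneg)
  have m2: "(1 + 4*lam + 2*lam*g*b + 2*lam*g) * Z^2 \<le> Mc lam g b * Z^2"
    using assms unfolding Mc_def by (intro mult_right_mono) (auto intro!: mult_nonneg_nonneg)
  have m3: "(g + 2*lam*g) * e^2 \<le> Mc lam g b * e^2"
    using assms unfolding Mc_def by (intro mult_right_mono) (auto intro!: mult_nonneg_nonneg)
  have eq: "2*X*(Z + g*b*X + g*e) + 4*lam*Z*(Z + g*b*X + g*e)
     = 2*X*Z + 2*g*b*X^2 + g*(2*e*X) + 4*lam*Z^2 + (2*lam*g*b)*(2*X*Z) + (2*lam*g)*(2*e*Z)"
    by (simp add: algebra_simps power2_eq_square)
  have eq2: "Mc lam g b * (X^2 + Z^2 + e^2) = Mc lam g b * X^2 + Mc lam g b * Z^2 + Mc lam g b * e^2"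
    by (simp add: algebra_simps)
  have eq3: "(1 + 2*g*b + g + 2*lam*g*b) * X^2 + (1 + 4*lam + 2*lam*g*b + 2*lam*g) * Z^2 + (g + 2*lam*g) * e^2
     = (X^2 + Z^2) + 2*g*b*X^2 + g*(X^2 + e^2) + 4*lam*Z^2 + (2*lam*g*b)*(X^2+Z^2) + (2*lam*g)*(Z^2+e^2)"
    by (simp add: algebra_simps)
  show ?thesis unfolding eq eq2 using h1 k1 k2 k3 m1 m2 m3 eq3 by linarith
qed

lemma gron:
  assumes S1: "sol lam c1 g y1 y1'" and S2: "sol lam c2 g y2 y2'"
    and cb: "c1 \<le> b" "c2 \<le> b" and t: "0 \<le> t" "t < lam"
  shows "(y1 t - y2 t)^2 \<le> ((1 + g^2) * (y1 0 - y2 0)^2 + (c1 - c2)^2) * exp (Mc lam g b * lam)"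
proof -
  interpret s1: sol lam c1 g y1 y1' by fact
  interpret s2: sol lam c2 g y2 y2' by fact
  have lam: "0 < lam" by (rule s1.lam)
  have g: "0 < g" by (rule s1.g0)
  have b: "0 \<le> b" using cb s1.c0 by simp
  define M where "M = Mc lam g b"
  have M0: "0 \<le> M" unfolding M_def Mc_def using lam g b by (auto intro!: add_nonneg_nonneg mult_nonneg_nonneg)
  define e where "e = c1 - c2"
  define D where "D x = (y1 x - y2 x)^2 + (s1.w x - s2.w x)^2" for x
  have mono: "(D 0 + e^2) * exp (- (M * 0)) \<ge> (D t + e^2) * exp (- (M * t))"
  proof (rule DERIV_nonpos_imp_decreasing_open[OF t(1), where f = "\<lambda>x. (D x + e^2) * exp (- (M * x))"])
    show "continuous_on {0..t} (\<lambda>x. (D x + e^2) * exp (- (M * x)))"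
      unfolding D_def
      using continuous_on_subset[OF s1.cont, of "{0..t}"] continuous_on_subset[OF s2.cont, of "{0..t}"]
        s1.contw[OF t(2)] s2.contw[OF t(2)] t
      by (intro continuous_intros) auto
    fix x assume x: "0 < x" "x < t"
    hence xi: "x \<in> {0<..<lam}" using t by auto
    define A where "A = 1 + c1 * y1 x"
    define B where "B = 1 + c2 * y2 x"
    have A1: "1 \<le> A" unfolding A_def using s1.den[of x] xi by auto
    have B1: "1 \<le> B" unfolding B_def using s2.den[of x] xi by auto
    define P where "P = s1.w x / A - s2.w x / B"
    have yp1: "y1' x = s1.w x / A" unfolding A_def using s1.yp[of x] xi by auto
    have yp2: "y2' x = s2.w x / B" unfolding B_def using s2.yp[of x] xi by auto
    have dw1: "(s1.w has_real_derivative (- 2 * x * s1.w x / A)) (at x)" unfolding A_def by (rule s1.dw[OF xi])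
    have dw2: "(s2.w has_real_derivative (- 2 * x * s2.w x / B)) (at x)" unfolding B_def by (rule s2.dw[OF xi])
    define D' where "D' = 2 * (y1 x - y2 x) * P + 2 * (s1.w x - s2.w x) * (- 2 * x * P)"
    have dD: "(D has_real_derivative D') (at x)"
    proof -
      have "((\<lambda>x. (y1 x - y2 x)^2 + (s1.w x - s2.w x)^2) has_real_derivative
        2 * ((y1' x - y2' x) * (y1 x - y2 x)) + 2 * ((2 * x * s2.w x / B - 2 * x * s1.w x / A) * (s1.w x - s2.w x))) (at x)"
        by (rule derivative_eq_intros s1.dy[OF xi] s2.dy[OF xi] dw1 dw2 refl | simp)+
      moreover have "2 * ((y1' x - y2' x) * (y1 x - y2 x)) + 2 * ((2 * x * s2.w x / B - 2 * x * s1.w x / A) * (s1.w x - s2.w x)) = D'"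
        unfolding D'_def P_def yp1 yp2 using A1 B1 by (simp add: field_simps)
      ultimately show ?thesis unfolding D_def[abs_def] by simp
    qed
    have dG: "((\<lambda>x. (D x + e^2) * exp (- (M * x))) has_real_derivative
        (D' + 0) * exp (- (M * x)) + (D x + e^2) * (exp (- (M * x)) * (- (M * 1)))) (at x)"
      by (rule derivative_eq_intros dD refl | simp)+
    have w2: "0 < s2.w x" "s2.w x \<le> g" using s2.wpos[of x] s2.wle[of x] xi by auto
    have Pb: "\<bar>P\<bar> \<le> \<bar>s1.w x - s2.w x\<bar> + g * b * \<bar>y1 x - y2 x\<bar> + g * \<bar>e\<bar>"
    proof -
      have e1: "P = (s1.w x - s2.w x) / A + s2.w x * ((B - A) / (A * B))"
        unfolding P_def using A1 B1 by (simp add: field_simps)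
      have t1: "\<bar>(s1.w x - s2.w x) / A\<bar> \<le> \<bar>s1.w x - s2.w x\<bar>"
      proof -
        have "\<bar>s1.w x - s2.w x\<bar> / A \<le> \<bar>s1.w x - s2.w x\<bar> / 1" using A1 by (intro divide_left_mono) auto
        thus ?thesis using A1 by (simp add: abs_div)
      qed
      have AB: "1 \<le> A * B" using A1 B1 mult_mono[of 1 A 1 B] by auto
      have "\<bar>(B - A) / (A * B)\<bar> \<le> \<bar>B - A\<bar>"
      proof -
        have "\<bar>B - A\<bar> / (A * B) \<le> \<bar>B - A\<bar> / 1" using AB by (intro divide_left_mono) auto
        thus ?thesis using AB by (simp add: abs_div)
      qed
      also have "\<bar>B - A\<bar> \<le> b * \<bar>y1 x - y2 x\<bar> + \<bar>e\<bar>"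
      proof -
        have r2: "0 \<le> y2 x" "y2 x \<le> 1" using s2.rng[of x] xi by auto
        have "B - A = - (c1 * (y1 x - y2 x)) - e * y2 x" unfolding A_def B_def e_def by (simp add: algebra_simps)
        hence "\<bar>B - A\<bar> = \<bar>(- (c1 * (y1 x - y2 x))) + (- (e * y2 x))\<bar>" by simp
        also have "\<dots> \<le> \<bar>- (c1 * (y1 x - y2 x))\<bar> + \<bar>- (e * y2 x)\<bar>" by (rule abs_triangle_ineq)
        also have "\<dots> = c1 * \<bar>y1 x - y2 x\<bar> + \<bar>e\<bar> * y2 x" using s1.c0 r2 by (simp add: abs_mult)
        also have "\<dots> \<le> b * \<bar>y1 x - y2 x\<bar> + \<bar>e\<bar> * 1"
          using cb r2 by (intro add_mono mult_right_mono mult_left_mono) auto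
        finally show ?thesis by simp
      qed
      finally have t2: "\<bar>(B - A) / (A * B)\<bar> \<le> b * \<bar>y1 x - y2 x\<bar> + \<bar>e\<bar>" .
      have "\<bar>s2.w x * ((B - A) / (A * B))\<bar> \<le> g * (b * \<bar>y1 x - y2 x\<bar> + \<bar>e\<bar>)"
        unfolding abs_mult using w2 t2 by (intro mult_mono) auto
      moreover have "\<bar>P\<bar> \<le> \<bar>(s1.w x - s2.w x) / A\<bar> + \<bar>s2.w x * ((B - A) / (A * B))\<bar>"
        unfolding e1 by (rule abs_triangle_ineq)
      ultimately show ?thesis using t1 by (simp add: algebra_simps)
    qed
    define X where "X = \<bar>y1 x - y2 x\<bar>"
    define Z where "Z = \<bar>s1.w x - s2.w x\<bar>"
    have D'b: "D' \<le> M * (D x + e^2)"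
    proof -
      have "D' \<le> 2 * X * \<bar>P\<bar> + 4 * lam * Z * \<bar>P\<bar>"
      proof -
        have "2 * (y1 x - y2 x) * P \<le> \<bar>2 * (y1 x - y2 x) * P\<bar>" by simp
        also have "\<dots> = 2 * X * \<bar>P\<bar>" unfolding X_def by (simp only: abs_mult abs_numeral)
        finally have "2 * (y1 x - y2 x) * P \<le> 2 * X * \<bar>P\<bar>" .
        moreover have "2 * (s1.w x - s2.w x) * (- 2 * x * P) \<le> 4 * lam * Z * \<bar>P\<bar>"
        proof -
          have "2 * (s1.w x - s2.w x) * (- 2 * x * P) \<le> \<bar>2 * (s1.w x - s2.w x) * (- 2 * x * P)\<bar>" by simp
          also have "\<dots> = 4 * x * Z * \<bar>P\<bar>" unfolding Z_def
            by (simp only: abs_mult abs_numeral abs_neg_numeral abs_of_pos[OF x(1)]) (simp add: algebra_simps)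
          also have "\<dots> \<le> 4 * lam * Z * \<bar>P\<bar>" unfolding Z_def using x t
            by (intro mult_right_mono) auto
          finally show ?thesis .
        qed
        ultimately show ?thesis unfolding D'_def by linarith
      qed
      also have "\<dots> \<le> 2*X*(Z + g*b*X + g*\<bar>e\<bar>) + 4*lam*Z*(Z + g*b*X + g*\<bar>e\<bar>)"
        using Pb lam unfolding X_def Z_def by (intro add_mono mult_left_mono) auto
      also have "\<dots> \<le> M * (X^2 + Z^2 + \<bar>e\<bar>^2)" unfolding M_def
        by (rule poly_bound) (use g b lam in \<open>auto simp: X_def Z_def\<close>)
      also have "\<dots> = M * (D x + e^2)" unfolding X_def Z_def D_def by simp
      finally show ?thesis .
    qed
    have "(D' + 0) * exp (- (M * x)) + (D x + e^2) * (exp (- (M * x)) * (- (M * 1))) = (D' - M * (D x + e^2)) * exp (- (M * x))"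
      by (simp add: algebra_simps)
    also have "\<dots> \<le> 0" using D'b by (intro mult_nonpos_nonneg) auto
    finally show "\<exists>y. ((\<lambda>x. (D x + e^2) * exp (- (M * x))) has_real_derivative y) (at x) \<and> y \<le> 0"
      using dG by blast
  qed
  have "D t + e^2 \<le> (D 0 + e^2) * exp (M * t)"
  proof -
    have "(D t + e^2) * exp (- (M * t)) * exp (M * t) \<le> (D 0 + e^2) * exp (M * t)"
      using mono by (intro mult_right_mono) auto
    moreover have "(D t + e^2) * exp (- (M * t)) * exp (M * t) = D t + e^2"
      using exp_minus_inverse[of "M * t"] by (simp add: mult.assoc mult.commute)
    ultimately show ?thesis by simp
  qed
  also have "\<dots> \<le> (D 0 + e^2) * exp (M * lam)"
    using t M0 by (intro mult_left_mono) (auto simp: D_def intro!: mult_left_mono)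
  finally have fin: "D t + e^2 \<le> (D 0 + e^2) * exp (M * lam)" .
  have D0: "D 0 = (1 + g^2) * (y1 0 - y2 0)^2" unfolding D_def s1.w0 s2.w0 by (simp add: algebra_simps power2_eq_square)
  have "(y1 t - y2 t)^2 \<le> D t + e^2" unfolding D_def by simp
  thus ?thesis using fin unfolding D0 M_def e_def by linarith
qed


lemma mk_sol:
  assumes "lam > 0" "g > 0" "0 \<le> c" "h \<in> Kset lam" "solves_bvp lam g c h"
  shows "\<exists>h'. sol lam c g h h'"
proof -
  from assms(5) obtain h' where H:
    "\<forall>x\<in>{0..lam}. (h has_real_derivative h' x) (at x within {0..lam})"
    "\<forall>x\<in>{0<..<lam}. ((\<lambda>t. (1 + c * h t) * h' t) has_real_derivative (- 2 * x * h' x)) (at x)"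
    "h' 0 + c * h 0 * h' 0 - g * h 0 = 0" "h lam = 1"
    unfolding solves_bvp_def by blast
  have "sol lam c g h h'"
    using assms H unfolding Kset_def by unfold_locales auto
  thus ?thesis by blast
qed

theorem theorem3p9:
  fixes lam \<gamma> b :: real and \<phi> :: "real \<Rightarrow> real \<Rightarrow> real"
  assumes "lam > 0" and "\<gamma> > 0"
    and phi: "\<And>c. c \<in> {0..<beta1 \<gamma>} \<Longrightarrow>
               \<phi> c \<in> Kset lam \<and> solves_bvp lam \<gamma> c (\<phi> c)
               \<and> (\<forall>h\<in>Kset lam. solves_bvp lam \<gamma> c h \<longrightarrow> (\<forall>x\<in>{0..lam}. h x = \<phi> c x))"
    and "0 < b" and "b < beta1 \<gamma>"
  shows "\<exists>L>0. \<forall>b1\<in>{0..b}. \<forall>b2\<in>{0..b}.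
           (SUP x\<in>{0..lam}. \<bar>\<phi> b1 x - \<phi> b2 x\<bar>) \<le> L * \<bar>b1 - b2\<bar>"
proof -
  have sols: "\<And>c. c \<in> {0..b} \<Longrightarrow> \<exists>h'. sol lam c \<gamma> (\<phi> c) h'"
  proof -
    fix c assume c: "c \<in> {0..b}"
    hence "c \<in> {0..<beta1 \<gamma>}" using assms by auto
    from phi[OF this] show "\<exists>h'. sol lam c \<gamma> (\<phi> c) h'" using mk_sol assms c by auto
  qed
  define K where "K = 1 + 2 * lam^3 * \<gamma>"
  define C where "C = ((1 + \<gamma>^2) * K^2 + 1) * exp (Mc lam \<gamma> b * lam)"
  define L where "L = sqrt C + 1"
  have C0: "0 \<le> C" unfolding C_def by (intro mult_nonneg_nonneg add_nonneg_nonneg) auto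
  have K0: "0 \<le> K" unfolding K_def using assms by simp
  have "L > 0" unfolding L_def using C0 by (simp add: add_nonneg_pos)
  moreover have "\<forall>b1\<in>{0..b}. \<forall>b2\<in>{0..b}. (SUP x\<in>{0..lam}. \<bar>\<phi> b1 x - \<phi> b2 x\<bar>) \<le> L * \<bar>b1 - b2\<bar>"
  proof (intro ballI)
    fix b1 b2 assume b1: "b1 \<in> {0..b}" and b2: "b2 \<in> {0..b}"
    obtain y1' where S1: "sol lam b1 \<gamma> (\<phi> b1) y1'" using sols[OF b1] by blast
    obtain y2' where S2: "sol lam b2 \<gamma> (\<phi> b2) y2'" using sols[OF b2] by blast
    define d where "d = \<bar>b1 - b2\<bar>"
    have d0: "0 \<le> d" unfolding d_def by simp
    have a1: "\<phi> b1 0 - \<phi> b2 0 \<le> K * d" using a_est[OF S1 S2] unfolding K_def d_def by simp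
    have a2: "\<phi> b2 0 - \<phi> b1 0 \<le> K * d" using a_est[OF S2 S1] unfolding K_def d_def by (simp add: abs_minus_commute)
    have aa: "\<bar>\<phi> b1 0 - \<phi> b2 0\<bar> \<le> K * d" using a1 a2 by (simp add: abs_le_iff)
    have asq: "(\<phi> b1 0 - \<phi> b2 0)^2 \<le> (K * d)^2"
      using power_mono[OF aa, of 2] by simp
    have pt: "\<bar>\<phi> b1 x - \<phi> b2 x\<bar> \<le> L * d" if x: "x \<in> {0..lam}" for x
    proof (cases "x = lam")
      case True
      interpret s1: sol lam b1 \<gamma> "\<phi> b1" y1' by fact
      interpret s2: sol lam b2 \<gamma> "\<phi> b2" y2' by fact
      have "0 \<le> L * d" using \<open>L > 0\<close> d0 by simp
      thus ?thesis using True s1.End s2.End by simp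
    next
      case False
      hence xl: "0 \<le> x" "x < lam" using x by auto
      have "(\<phi> b1 x - \<phi> b2 x)^2 \<le> ((1 + \<gamma>^2) * (\<phi> b1 0 - \<phi> b2 0)^2 + (b1 - b2)^2) * exp (Mc lam \<gamma> b * lam)"
        using gron[OF S1 S2 _ _ xl] b1 b2 by auto
      also have "\<dots> \<le> ((1 + \<gamma>^2) * (K * d)^2 + d^2) * exp (Mc lam \<gamma> b * lam)"
        using asq unfolding d_def by (intro mult_right_mono add_mono mult_left_mono) auto
      also have "\<dots> = C * d^2" unfolding C_def by (simp add: algebra_simps power2_eq_square)
      finally have sq: "(\<phi> b1 x - \<phi> b2 x)^2 \<le> C * d^2" .
      have "\<bar>\<phi> b1 x - \<phi> b2 x\<bar> = sqrt ((\<phi> b1 x - \<phi> b2 x)^2)" by simp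
      also have "\<dots> \<le> sqrt (C * d^2)" using sq by (rule real_sqrt_le_mono)
      also have "\<dots> = sqrt C * d" using d0 by (simp add: real_sqrt_mult)
      also have "\<dots> \<le> L * d" unfolding L_def using d0 by (intro mult_right_mono) auto
      finally show ?thesis .
    qed
    show "(SUP x\<in>{0..lam}. \<bar>\<phi> b1 x - \<phi> b2 x\<bar>) \<le> L * \<bar>b1 - b2\<bar>"
      using assms pt unfolding d_def by (intro cSUP_least) auto
  qed
  ultimately show ?thesis by blast
qed

end
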